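(* Let $n\ge 1$ and consider the $n$-qubit bit flip (repetition) code, with encoded states $\overline{|0\rangle}=|0\rangle^{\otimes n}$ and $\overline{|1\rangle}=|1\rangle^{\otimes n}$. Suppose each of the $n$ physical qubits independently suffers the Pauli error $\sigma\in\{I,X,Y,Z\}$ with probability $p_\sigma$, where $p_I+p_X+p_Y+p_Z=1$. Put $q_X=p_X+p_Y$ and, for $0\le k\le n$, $$a_k=\binom{n}{k}q_X^k(1-q_X)^{n-k},\qquad b_k=\binom{n}{k}(p_X-p_Y)^k(p_I-p_Z)^{n-k}.$$ For $0\le k<\frac n2$, the probability $l_\sigma(k)$ of measuring a syndrome corresponding to an error of distance $k$ and having resulting logical error $\sigma$ is $$l_I(k)=\frac{a_k+b_k}{2},\quad l_X(k)=\frac{a_{n-k}+b_{n-k}}{2},\quad l_Y(k)=\frac{a_{n-k}-b_{n-k}}{2},\quad l_Z(k)=\frac{a_k-b_k}{2}.$$ If $n$ is even, then for $k=\frac n2$, $$l_I(\tfrac n2)=l_X(\tfrac n2)=\frac{a_{n/2}+b_{n/2}}{4},\qquad l_Y(\tfrac n2)=l_Z(\tfrac n2)=\frac{a_{n/2}-b_{n/2}}{4}.$$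
   Context: An $n$-qubit Pauli error $E$ (tensor product of single-qubit Paulis, up to phase) has a bit-flip pattern $s\in\{0,1\}^n$, where $s_i=1$ iff the $i$-th factor is $X$ or $Y$. Syndrome measurement of the bit flip code (stabilizers $Z_iZ_{i+1}$) reveals $s$ up to complementation, i.e. the unordered pair $\{s,\bar s\}$. Such a syndrome is said to correspond to an error of distance $k=\min(|s|,n-|s|)$, where $|s|$ is the Hamming weight. Recovery applies $X$ on the qubits of the minimum-weight representative of $\{s,\bar s\}$ (when $|s|=n/2$, a fixed choice of one of the two representatives is made). After recovery the residual operator equals, up to phase and stabilizers, a logical operator $\overline{X}^{\alpha}\overline{Z}^{\beta}$, where $\alpha=1$ iff the applied representative differs from $s$ (i.e. a logical bit flip occurred) and $\beta=1$ iff the total number of phase-type components of the residual is odd (a logical phase flip). The logical error $\sigma$ is $I,X,Z,Y$ for $(\alpha,\beta)=(0,0),(1,0),(0,1),(1,1)$ respectively. *)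

theory Defs
  imports Complex_Main
begin

datatype pauli = PI | PX | PY | PZ

fun flips :: "pauli \<Rightarrow> bool" where
  "flips PX = True" | "flips PY = True" | "flips PI = False" | "flips PZ = False"

fun phase_type :: "pauli \<Rightarrow> bool" where
  "phase_type PZ = True" | "phase_type PY = True" | "phase_type PI = False" | "phase_type PX = False"

fun pmult :: "pauli \<Rightarrow> pauli \<Rightarrow> pauli" where
  "pmult PI b = b"
| "pmult a PI = a"
| "pmult PX PX = PI" | "pmult PY PY = PI" | "pmult PZ PZ = PI"
| "pmult PX PY = PZ" | "pmult PY PX = PZ"
| "pmult PX PZ = PY" | "pmult PZ PX = PY"
| "pmult PY PZ = PX" | "pmult PZ PY = PX"

definition pattern :: "pauli list \<Rightarrow> bool list" where
  "pattern E = map flips E"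

definition weight :: "bool list \<Rightarrow> nat" where
  "weight s = count_list s True"

definition compl :: "bool list \<Rightarrow> bool list" where
  "compl s = map Not s"

text \<open>Distance of the syndrome {s, compl s}.\<close>
definition err_dist :: "pauli list \<Rightarrow> nat" where
  "err_dist E = min (weight (pattern E)) (length E - weight (pattern E))"

text \<open>Minimum-weight representative; c is the fixed choice used when |s| = n/2.\<close>
definition recov :: "(bool list \<Rightarrow> bool list) \<Rightarrow> bool list \<Rightarrow> bool list" where
  "recov c s = (if 2 * weight s < length s then s
                else if 2 * weight s > length s then compl s
                else c s)"

definition residual :: "(bool list \<Rightarrow> bool list) \<Rightarrow> pauli list \<Rightarrow> pauli list" where
  "residual c E = map2 (\<lambda>e r. if r then pmult e PX else e) E (recov c (pattern E))"

definition logical_error :: "(bool list \<Rightarrow> bool list) \<Rightarrow> pauli list \<Rightarrow> pauli" where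
  "logical_error c E =
     (let \<alpha> = (recov c (pattern E) \<noteq> pattern E);
          \<beta> = odd (length (filter phase_type (residual c E)))
      in if \<not> \<alpha> \<and> \<not> \<beta> then PI else if \<alpha> \<and> \<not> \<beta> then PX
         else if \<not> \<alpha> \<and> \<beta> then PZ else PY)"

definition err_prob :: "(pauli \<Rightarrow> real) \<Rightarrow> pauli list \<Rightarrow> real" where
  "err_prob p E = prod_list (map p E)"

definition lprob :: "nat \<Rightarrow> (pauli \<Rightarrow> real) \<Rightarrow> (bool list \<Rightarrow> bool list) \<Rightarrow> pauli \<Rightarrow> nat \<Rightarrow> real" where
  "lprob n p c \<sigma> k = (\<Sum>E\<in>{E. length E = n \<and> err_dist E = k \<and> logical_error c E = \<sigma>}. err_prob p E)"

definition valid_choice :: "nat \<Rightarrow> (bool list \<Rightarrow> bool list) \<Rightarrow> bool" where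
  "valid_choice n c \<longleftrightarrow> (\<forall>s. length s = n \<and> 2 * weight s = n \<longrightarrow>
       (c s = s \<or> c s = compl s) \<and> c (compl s) = c s)"

end

theory Submission
  imports Defs
begin

definition ph :: "pauli list \<Rightarrow> nat" where "ph E = length (filter phase_type E)"
definition Aw :: "(pauli \<Rightarrow> real) \<Rightarrow> real \<Rightarrow> nat \<Rightarrow> nat \<Rightarrow> real" where
  "Aw p t n w = (p PX + t * p PY)^w * (p PI + t * p PZ)^(n-w)"
definition LEf :: "bool \<Rightarrow> bool \<Rightarrow> pauli" where
  "LEf \<alpha> \<beta> = (if \<not>\<alpha> \<and> \<not>\<beta> then PI else if \<alpha> \<and> \<not>\<beta> then PX else if \<not>\<alpha> \<and> \<beta> then PZ else PY)"

lemma UNIV_pauli: "(UNIV::pauli set) = {PI,PX,PY,PZ}"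
  using pauli.exhaust by auto

lemma finite_lenP: "finite {E::pauli list. length E = n}"
proof -
  have "finite {E::pauli list. set E \<subseteq> UNIV \<and> length E = n}"
    by (rule finite_lists_length_eq) (simp add: UNIV_pauli)
  thus ?thesis by simp
qed

lemma finite_lenB: "finite {E::bool list. length E = n}"
proof -
  have "finite {E::bool list. set E \<subseteq> UNIV \<and> length E = n}"
    by (rule finite_lists_length_eq) simp
  thus ?thesis by simp
qed

lemma weight_le: "weight s \<le> length s"
  unfolding weight_def by (induction s) auto

lemma weight_compl: "weight (compl s) = length s - weight s"
  unfolding weight_def compl_def by (induction s) (auto simp: Suc_diff_le count_le_length)

lemma ps: "(\<Sum>E\<in>{E. map flips E = s}. prod_list (map p E) * t ^ ph E) = Aw p t (length s) (weight s)"
proof (induction s)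
  case Nil
  have "{E. map flips E = []} = {[]}" by auto
  then show ?case by (simp add: ph_def Aw_def weight_def)
next
  case (Cons b s)
  let ?A = "{e. flips e = b}" let ?B = "{E. map flips E = s}"
  let ?g = "\<lambda>E. prod_list (map p E) * t ^ ph E"
  have fB: "finite ?B" by (rule finite_subset[OF _ finite_lenP[of "length s"]]) auto
  have fU: "finite (UNIV::pauli set)" by (simp add: UNIV_pauli)
  have fA: "finite ?A" by (rule finite_subset[OF subset_UNIV fU])
  have eq: "{E. map flips E = b#s} = (\<lambda>(e,E). e#E) ` (?A \<times> ?B)"
    by (auto simp: Cons_eq_map_conv image_def)
  have inj: "inj_on (\<lambda>(e,E). e#E) (?A \<times> ?B)" by (auto simp: inj_on_def)
  have "(\<Sum>E\<in>{E. map flips E = b#s}. ?g E) = (\<Sum>x\<in>?A\<times>?B. ?g ((\<lambda>(e,E). e#E) x))"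
    unfolding eq by (subst sum.reindex[OF inj]) (simp only: comp_def)
  also have "\<dots> = (\<Sum>e\<in>?A. \<Sum>E\<in>?B. (p e * t ^ (if phase_type e then 1 else 0)) * ?g E)"
    by (subst sum.cartesian_product) (auto simp: ph_def intro!: sum.cong)
  also have "\<dots> = (\<Sum>e\<in>?A. p e * t ^ (if phase_type e then 1 else 0)) * (\<Sum>E\<in>?B. ?g E)"
    by (simp add: sum_product)
  also have "\<dots> = (\<Sum>e\<in>?A. p e * t ^ (if phase_type e then 1 else 0)) * Aw p t (length s) (weight s)"
    using Cons by simp
  also have "\<dots> = Aw p t (length (b#s)) (weight (b#s))"
  proof (cases b)
    case True
    have "?A = {PX,PY}" using True by (intro set_eqI, case_tac x) auto
    then show ?thesis using True by (simp add: Aw_def weight_def algebra_simps)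
  next
    case False
    have "?A = {PI,PZ}" using False by (intro set_eqI, case_tac x) auto
    moreover have "Suc (length s) - weight s = Suc (length s - weight s)"
      using weight_le[of s] by simp
    ultimately show ?thesis using False by (simp add: Aw_def weight_def algebra_simps)
  qed
  finally show ?case .
qed

lemma inner: "(\<Sum>E\<in>{E. map flips E = s}. if Q (odd (ph E)) then prod_list (map p E) else 0)
  = (if Q False then (Aw p 1 (length s) (weight s) + Aw p (-1) (length s) (weight s))/2 else 0)
  + (if Q True then (Aw p 1 (length s) (weight s) - Aw p (-1) (length s) (weight s))/2 else 0)"
proof -
  let ?S = "{E. map flips E = s}"
  let ?x = "\<lambda>E. prod_list (map p E)"
  have pt: "(if Q (odd (ph E)) then ?x E else 0) =
     (if Q False then (?x E * 1^ph E + ?x E * (-1)^ph E)/2 else 0) +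
     (if Q True then (?x E * 1^ph E - ?x E * (-1)^ph E)/2 else 0)" for E
    by (cases "even (ph E)") auto
  have "(\<Sum>E\<in>?S. if Q (odd (ph E)) then ?x E else 0) =
     (\<Sum>E\<in>?S. (if Q False then (?x E * 1^ph E + ?x E * (-1)^ph E)/2 else 0)) +
     (\<Sum>E\<in>?S. (if Q True then (?x E * 1^ph E - ?x E * (-1)^ph E)/2 else 0))"
    unfolding pt by (rule sum.distrib)
  also have "\<dots> = (if Q False then (Aw p 1 (length s) (weight s) + Aw p (-1) (length s) (weight s))/2 else 0)
  + (if Q True then (Aw p 1 (length s) (weight s) - Aw p (-1) (length s) (weight s))/2 else 0)"
  proof -
    have p1: "(\<Sum>E\<in>?S. ?x E) = Aw p 1 (length s) (weight s)" using ps[where s=s and p=p and t=1] by simp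
    have pm: "(\<Sum>E\<in>?S. ?x E * (-1)^ph E) = Aw p (-1) (length s) (weight s)" using ps[where s=s and p=p and t="-1"] by simp
    show ?thesis
      by (cases "Q False"; cases "Q True")
         (simp_all add: sum.distrib sum_subtractf sum_divide_distrib[symmetric] p1 pm)
  qed
  finally show ?thesis .
qed
lemma phase_pmult: "phase_type (pmult e PX) = phase_type e" by (cases e) auto

lemma res_ph: "length r = length E \<Longrightarrow>
  length (filter phase_type (map2 (\<lambda>e r. if r then pmult e PX else e) E r)) = ph E"
proof (induction E arbitrary: r)
  case Nil then show ?case by (simp add: ph_def)
next
  case (Cons e E)
  then obtain x r' where "r = x # r'" "length r' = length E" by (cases r) auto
  with Cons.IH[of r'] show ?case by (simp add: ph_def phase_pmult)
qed

lemma recov_len: "valid_choice n c \<Longrightarrow> length s = n \<Longrightarrow> length (recov c s) = n"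
  unfolding recov_def valid_choice_def compl_def by auto

lemma le_char: "valid_choice n c \<Longrightarrow> length E = n \<Longrightarrow>
  logical_error c E = LEf (recov c (pattern E) \<noteq> pattern E) (odd (ph E))"
proof -
  assume v: "valid_choice n c" and l: "length E = n"
  have "length (recov c (pattern E)) = length E"
    using recov_len[OF v, of "pattern E"] l by (simp add: pattern_def)
  then have "length (filter phase_type (residual c E)) = ph E"
    unfolding residual_def by (rule res_ph)
  then show ?thesis unfolding logical_error_def LEf_def Let_def by simp
qed

lemma red:
  "(\<Sum>E\<in>{E. length E = n \<and> Q (pattern E) (odd (ph E))}. prod_list (map p E)) =
   (\<Sum>s\<in>{s. length s = n}.
      (if Q s False then (Aw p 1 n (weight s) + Aw p (-1) n (weight s))/2 else 0)
    + (if Q s True then (Aw p 1 n (weight s) - Aw p (-1) n (weight s))/2 else 0))"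
proof -
  let ?L = "{E::pauli list. length E = n}"
  let ?h = "\<lambda>E. if Q (pattern E) (odd (ph E)) then prod_list (map p E) else 0"
  have "(\<Sum>E\<in>{E. length E = n \<and> Q (pattern E) (odd (ph E))}. prod_list (map p E))
      = (\<Sum>E\<in>{E\<in>?L. Q (pattern E) (odd (ph E))}. prod_list (map p E))" by simp
  also have "\<dots> = sum ?h ?L" by (rule sum.inter_filter[OF finite_lenP])
  also have "\<dots> = (\<Sum>s\<in>{s. length s = n}. sum ?h {E. E \<in> ?L \<and> pattern E = s})"
    by (rule sum.group[symmetric, OF finite_lenP finite_lenB]) (auto simp: pattern_def)
  also have "\<dots> = (\<Sum>s\<in>{s. length s = n}.
      (if Q s False then (Aw p 1 n (weight s) + Aw p (-1) n (weight s))/2 else 0)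
    + (if Q s True then (Aw p 1 n (weight s) - Aw p (-1) n (weight s))/2 else 0))"
  proof (rule sum.cong[OF refl])
    fix s :: "bool list" assume "s \<in> {s. length s = n}"
    then have ls: "length s = n" by simp
    have "{E. E \<in> ?L \<and> pattern E = s} = {E. map flips E = s}"
      using ls by (auto simp: pattern_def)
    then have "sum ?h {E. E \<in> ?L \<and> pattern E = s} =
       (\<Sum>E\<in>{E. map flips E = s}. if Q s (odd (ph E)) then prod_list (map p E) else 0)"
      by (auto simp: pattern_def intro!: sum.cong)
    also have "\<dots> = (if Q s False then (Aw p 1 (length s) (weight s) + Aw p (-1) (length s) (weight s))/2 else 0)
    + (if Q s True then (Aw p 1 (length s) (weight s) - Aw p (-1) (length s) (weight s))/2 else 0)" by (rule inner)
    finally show "sum ?h {E. E \<in> ?L \<and> pattern E = s} = 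
      (if Q s False then (Aw p 1 n (weight s) + Aw p (-1) n (weight s))/2 else 0)
    + (if Q s True then (Aw p 1 n (weight s) - Aw p (-1) n (weight s))/2 else 0)" using ls by simp
  qed
  finally show ?thesis .
qed

lemma sum_len_Suc: "(\<Sum>s\<in>{s::bool list. length s = Suc n}. g s) =
  (\<Sum>s\<in>{s. length s = n}. g (True#s)) + (\<Sum>s\<in>{s. length s = n}. g (False#s))"
proof -
  let ?L = "{s::bool list. length s = n}"
  have eq: "{s::bool list. length s = Suc n} = Cons True ` ?L \<union> Cons False ` ?L"
    by (auto simp: length_Suc_conv image_def)
  have "(\<Sum>s\<in>{s::bool list. length s = Suc n}. g s) = sum g (Cons True ` ?L) + sum g (Cons False ` ?L)"
    unfolding eq by (rule sum.union_disjoint) (auto intro: finite_lenB)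
  also have "\<dots> = (\<Sum>s\<in>?L. g (True#s)) + (\<Sum>s\<in>?L. g (False#s))"
    by (simp add: sum.reindex)
  finally show ?thesis .
qed

lemma cnt: "(\<Sum>s\<in>{s::bool list. length s = n}. if weight s = w then (1::real) else 0) = real (n choose w)"
proof (induction n arbitrary: w)
  case 0
  have "{s::bool list. length s = 0} = {[]}" by auto
  then show ?case by (simp add: weight_def)
next
  case (Suc n)
  have wT: "weight (True#s) = Suc (weight s)" and wF: "weight (False#s) = weight s" for s
    by (simp_all add: weight_def)
  show ?case
  proof (cases w)
    case 0
    then show ?thesis unfolding sum_len_Suc wT wF using Suc.IH[of 0] by simp
  next
    case (Suc v)
    then show ?thesis unfolding sum_len_Suc wT wF using Suc.IH[of v] Suc.IH[of w] by simp
  qed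
qed

lemma cntf: "(\<Sum>s\<in>{s::bool list. length s = n}. if weight s = w then (f::real) else 0) = real (n choose w) * f"
proof -
  have "(\<Sum>s\<in>{s::bool list. length s = n}. if weight s = w then (f::real) else 0)
      = (\<Sum>s\<in>{s::bool list. length s = n}. (if weight s = w then 1 else 0) * f)"
    by (rule sum.cong) auto
  also have "\<dots> = real (n choose w) * f" by (simp add: sum_distrib_right[symmetric] cnt)
  finally show ?thesis .
qed

lemma cardf: "(\<Sum>s\<in>{s::bool list. length s = n}. if P s then (f::real) else 0) = real (card {s. length s = n \<and> P s}) * f"
proof -
  have "(\<Sum>s\<in>{s::bool list. length s = n}. if P s then (f::real) else 0)
     = (\<Sum>s\<in>{s\<in>{s::bool list. length s = n}. P s}. f)"
    by (rule sum.inter_filter[symmetric, OF finite_lenB])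
  then show ?thesis by simp
qed

lemma compl_compl: "compl (compl s) = s" unfolding compl_def by (induction s) auto
lemma compl_neq: "s \<noteq> [] \<Longrightarrow> compl s \<noteq> s" unfolding compl_def by (cases s) auto
lemma length_compl: "length (compl s) = length s" unfolding compl_def by simp

lemma card_half:
  assumes v: "valid_choice n c" and n: "n = 2 * m" and m: "m \<ge> 1"
  shows "real (card {s. length s = n \<and> (weight s = m \<and> c s = s)}) = real (n choose m) / 2"
    and "real (card {s. length s = n \<and> (weight s = m \<and> c s \<noteq> s)}) = real (n choose m) / 2"
proof -
  let ?S1 = "{s. length s = n \<and> (weight s = m \<and> c s = s)}"
  let ?S2 = "{s. length s = n \<and> (weight s = m \<and> c s \<noteq> s)}"
  let ?W = "{s. length s = n \<and> weight s = m}"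
  have f1: "finite ?S1" by (rule finite_subset[OF _ finite_lenB[of n]]) auto
  have f2: "finite ?S2" by (rule finite_subset[OF _ finite_lenB[of n]]) auto
  have W: "?W = ?S1 \<union> ?S2" by auto
  have cW: "real (card ?W) = real (n choose m)"
    using cardf[where n=n and P="\<lambda>s. weight s = m" and f=1] cnt[where n=n and w=m] by simp
  have "card ?W = card ?S1 + card ?S2" unfolding W by (rule card_Un_disjoint[OF f1 f2]) auto
  moreover have "compl ` ?S1 = ?S2"
  proof
    show "compl ` ?S1 \<subseteq> ?S2"
    proof
      fix x assume "x \<in> compl ` ?S1"
      then obtain s where s: "s \<in> ?S1" "x = compl s" by auto
      then have ne: "s \<noteq> []" using n m by auto
      have "c (compl s) = c s" using v s unfolding valid_choice_def by (auto simp: n)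
      then show "x \<in> ?S2" using s n compl_neq[OF ne] by (auto simp: weight_compl length_compl)
    qed
  next
    show "?S2 \<subseteq> compl ` ?S1"
    proof
      fix s assume s: "s \<in> ?S2"
      have "c (compl s) = c s" "c s = s \<or> c s = compl s" using v s unfolding valid_choice_def by (auto simp: n)
      then have "compl s \<in> ?S1" using s n by (auto simp: weight_compl length_compl)
      then show "s \<in> compl ` ?S1" by (rule image_eqI[rotated]) (simp add: compl_compl)
    qed
  qed
  moreover have "inj_on compl ?S1" by (rule inj_on_inverseI[where g=compl]) (simp add: compl_compl)
  ultimately have "card ?W = 2 * card ?S1" using card_image[of compl ?S1] by simp
  then show "real (card ?S1) = real (n choose m) / 2" "real (card ?S2) = real (n choose m) / 2"
    using cW \<open>card ?W = card ?S1 + card ?S2\<close> by simp_all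
qed

lemma lp: assumes "valid_choice n c"
  shows "lprob n p c \<sigma> k = (\<Sum>s\<in>{s. length s = n}.
     (if min (weight s) (n - weight s) = k \<and> LEf (recov c s \<noteq> s) False = \<sigma>
      then (Aw p 1 n (weight s) + Aw p (-1) n (weight s))/2 else 0)
   + (if min (weight s) (n - weight s) = k \<and> LEf (recov c s \<noteq> s) True = \<sigma>
      then (Aw p 1 n (weight s) - Aw p (-1) n (weight s))/2 else 0))"
proof -
  define Q where "Q = (\<lambda>s \<beta>. min (weight s) (n - weight s) = k \<and> LEf (recov c s \<noteq> s) \<beta> = \<sigma>)"
  have eq: "{E. length E = n \<and> err_dist E = k \<and> logical_error c E = \<sigma>} =
    {E. length E = n \<and> Q (pattern E) (odd (ph E))}"
    using le_char[OF assms] by (auto simp: err_dist_def Q_def)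
  have "lprob n p c \<sigma> k = (\<Sum>E\<in>{E. length E = n \<and> Q (pattern E) (odd (ph E))}. prod_list (map p E))"
    unfolding lprob_def err_prob_def eq ..
  also have "\<dots> = (\<Sum>s\<in>{s. length s = n}.
      (if Q s False then (Aw p 1 n (weight s) + Aw p (-1) n (weight s))/2 else 0)
    + (if Q s True then (Aw p 1 n (weight s) - Aw p (-1) n (weight s))/2 else 0))"
    by (rule red)
  finally show ?thesis unfolding Q_def .
qed

theorem lemma1:
  fixes n :: nat and p :: "pauli \<Rightarrow> real" and c :: "bool list \<Rightarrow> bool list"
    and a b :: "nat \<Rightarrow> real"
  assumes "n \<ge> 1"
    and "\<And>\<sigma>. p \<sigma> \<ge> 0"
    and "p PI + p PX + p PY + p PZ = 1"
    and "valid_choice n c"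
    and "\<And>k. a k = real (n choose k) * (p PX + p PY) ^ k * (1 - (p PX + p PY)) ^ (n - k)"
    and "\<And>k. b k = real (n choose k) * (p PX - p PY) ^ k * (p PI - p PZ) ^ (n - k)"
  shows "(\<forall>k. 2 * k < n \<longrightarrow>
            lprob n p c PI k = (a k + b k) / 2 \<and>
            lprob n p c PX k = (a (n - k) + b (n - k)) / 2 \<and>
            lprob n p c PY k = (a (n - k) - b (n - k)) / 2 \<and>
            lprob n p c PZ k = (a k - b k) / 2)
       \<and> (even n \<longrightarrow>
            lprob n p c PI (n div 2) = (a (n div 2) + b (n div 2)) / 4 \<and>
            lprob n p c PX (n div 2) = (a (n div 2) + b (n div 2)) / 4 \<and>
            lprob n p c PY (n div 2) = (a (n div 2) - b (n div 2)) / 4 \<and>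
            lprob n p c PZ (n div 2) = (a (n div 2) - b (n div 2)) / 4)"
proof -
  have v: "valid_choice n c" by fact
  have hA: "a w = real (n choose w) * Aw p 1 n w" for w
  proof -
    have "1 - (p PX + p PY) = p PI + p PZ" using assms(3) by simp
    then show ?thesis using assms(5)[of w] by (simp add: Aw_def)
  qed
  have hB: "b w = real (n choose w) * Aw p (-1) n w" for w
    using assms(6)[of w] by (simp add: Aw_def)
  have rs: "recov c s = s" if "2 * weight s < length s" for s
    using that unfolding recov_def by simp
  have rc: "recov c s \<noteq> s" if "length s = n" "2 * weight s > n" for s
  proof -
    have "s \<noteq> []" using that assms(1) by auto
    then show ?thesis using that compl_neq[of s] unfolding recov_def by simp
  qed
  have part1: "\<forall>k. 2 * k < n \<longrightarrow>
            lprob n p c PI k = (a k + b k) / 2 \<and>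
            lprob n p c PX k = (a (n - k) + b (n - k)) / 2 \<and>
            lprob n p c PY k = (a (n - k) - b (n - k)) / 2 \<and>
            lprob n p c PZ k = (a k - b k) / 2"
  proof (intro allI impI)
    fix k assume k: "2 * k < n"
    have H1: "(min (weight s) (n - weight s) = k \<and> recov c s = s) = (weight s = k)"
      if "length s = n" for s
      using that k weight_le[of s] rs[of s] rc[of s] by (cases "weight s \<le> n - weight s") auto
    have H2: "(min (weight s) (n - weight s) = k \<and> recov c s \<noteq> s) = (weight s = n - k)"
      if "length s = n" for s
      using that k weight_le[of s] rs[of s] rc[of s] by (cases "weight s \<le> n - weight s") auto
    have I: "lprob n p c PI k = (\<Sum>s\<in>{s. length s = n}. if weight s = k then (Aw p 1 n k + Aw p (-1) n k)/2 else 0)"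
      unfolding lp[OF v] by (rule sum.cong[OF refl]) (use H1 k in \<open>auto simp: LEf_def\<close>)
    have Z: "lprob n p c PZ k = (\<Sum>s\<in>{s. length s = n}. if weight s = k then (Aw p 1 n k - Aw p (-1) n k)/2 else 0)"
      unfolding lp[OF v] by (rule sum.cong[OF refl]) (use H1 k in \<open>auto simp: LEf_def\<close>)
    have X: "lprob n p c PX k = (\<Sum>s\<in>{s. length s = n}. if weight s = n - k then (Aw p 1 n (n-k) + Aw p (-1) n (n-k))/2 else 0)"
      unfolding lp[OF v] by (rule sum.cong[OF refl]) (use H2 k in \<open>auto simp: LEf_def\<close>)
    have Y: "lprob n p c PY k = (\<Sum>s\<in>{s. length s = n}. if weight s = n - k then (Aw p 1 n (n-k) - Aw p (-1) n (n-k))/2 else 0)"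
      unfolding lp[OF v] by (rule sum.cong[OF refl]) (use H2 k in \<open>auto simp: LEf_def\<close>)
    show "lprob n p c PI k = (a k + b k) / 2 \<and>
            lprob n p c PX k = (a (n - k) + b (n - k)) / 2 \<and>
            lprob n p c PY k = (a (n - k) - b (n - k)) / 2 \<and>
            lprob n p c PZ k = (a k - b k) / 2"
      unfolding I X Y Z cntf hA hB by (simp add: algebra_simps add_divide_distrib diff_divide_distrib)
  qed
  have part2: "even n \<longrightarrow>
            lprob n p c PI (n div 2) = (a (n div 2) + b (n div 2)) / 4 \<and>
            lprob n p c PX (n div 2) = (a (n div 2) + b (n div 2)) / 4 \<and>
            lprob n p c PY (n div 2) = (a (n div 2) - b (n div 2)) / 4 \<and>
            lprob n p c PZ (n div 2) = (a (n div 2) - b (n div 2)) / 4"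
  proof
    assume e: "even n"
    define m where "m = n div 2"
    have nm: "n = 2 * m" using e m_def by simp
    have m1: "m \<ge> 1" using nm assms(1) by simp
    have H: "(min (weight s) (n - weight s) = m) = (weight s = m)" if "length s = n" for s
      using that nm weight_le[of s] by auto
    have R: "recov c s = c s" if "weight s = m" "length s = n" for s
      using that nm unfolding recov_def by simp
    have I: "lprob n p c PI m = (\<Sum>s\<in>{s. length s = n}. if weight s = m \<and> c s = s then (Aw p 1 n m + Aw p (-1) n m)/2 else 0)"
      unfolding lp[OF v] by (rule sum.cong[OF refl]) (use H R in \<open>auto simp: LEf_def\<close>)
    have Z: "lprob n p c PZ m = (\<Sum>s\<in>{s. length s = n}. if weight s = m \<and> c s = s then (Aw p 1 n m - Aw p (-1) n m)/2 else 0)"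
      unfolding lp[OF v] by (rule sum.cong[OF refl]) (use H R in \<open>auto simp: LEf_def\<close>)
    have X: "lprob n p c PX m = (\<Sum>s\<in>{s. length s = n}. if weight s = m \<and> c s \<noteq> s then (Aw p 1 n m + Aw p (-1) n m)/2 else 0)"
      unfolding lp[OF v] by (rule sum.cong[OF refl]) (use H R in \<open>auto simp: LEf_def\<close>)
    have Y: "lprob n p c PY m = (\<Sum>s\<in>{s. length s = n}. if weight s = m \<and> c s \<noteq> s then (Aw p 1 n m - Aw p (-1) n m)/2 else 0)"
      unfolding lp[OF v] by (rule sum.cong[OF refl]) (use H R in \<open>auto simp: LEf_def\<close>)
    show "lprob n p c PI (n div 2) = (a (n div 2) + b (n div 2)) / 4 \<and>
            lprob n p c PX (n div 2) = (a (n div 2) + b (n div 2)) / 4 \<and>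
            lprob n p c PY (n div 2) = (a (n div 2) - b (n div 2)) / 4 \<and>
            lprob n p c PZ (n div 2) = (a (n div 2) - b (n div 2)) / 4"
      unfolding m_def[symmetric] I X Y Z cardf card_half[OF v nm m1] hA hB
      by (simp add: algebra_simps add_divide_distrib diff_divide_distrib)
  qed
  show ?thesis using part1 part2 by blast
qed

end
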